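(* Let $n>0$ be a real number and let $\lambda=(\lambda_1,\dots,\lambda_\ell)$ and $\mu=(\mu_1,\dots,\mu_{\ell'})$ be finite weakly decreasing sequences of positive real numbers, each summing to $n$. If the multisets $\{\!\{\lambda_i\lambda_j : 1\le i<j\le \ell\}\!\}$ and $\{\!\{\mu_i\mu_j : 1\le i<j\le \ell'\}\!\}$ are equal, then $\lambda=\mu$ (that is, $\ell=\ell'$ and $\lambda_i=\mu_i$ for all $i$).
   Context: Multisets are compared with multiplicities. *)

theory Defs
  imports Main "HOL-Library.Multiset" Complex_Main
begin

definition pair_products :: "real list \<Rightarrow> real multiset" where
  "pair_products xs = mset [xs ! i * xs ! j. i \<leftarrow> [0..<length xs], j \<leftarrow> [0..<length xs], i < j]"

end

theory Submission
  imports Defs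
begin
lemma pp_Cons: "pair_products (x#xs) = mset (map ((*) x) xs) + pair_products xs"
proof -
  have u: "[0..<length (x#xs)] = 0 # map Suc [0..<length xs]"
    by (simp only: length_Cons upt_conv_Cons[OF zero_less_Suc] map_Suc_upt)
  have m: "map ((*) x) xs = map (\<lambda>j. x * xs ! j) [0..<length xs]"
    by (rule nth_equalityI) auto
  show ?thesis
    unfolding pair_products_def u
    apply (simp add: m comp_def nth_Cons_Suc)
    apply (unfold nth_Cons_Suc) apply (rule refl) done
qed

lemma pp_pow: "(\<Sum>z\<in>#pair_products xs. z^N) * 2 = (\<Sum>x\<leftarrow>xs. x^N)^2 - (\<Sum>x\<leftarrow>xs. x^(2*N))"
proof (induction xs)
  case Nil
  then show ?case by (simp add: pair_products_def)
next
  case (Cons x xs)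
  have a: "(\<Sum>z\<in>#image_mset ((*) x) (mset xs). z^N) = x^N * (\<Sum>y\<leftarrow>xs. y^N)"
    by (induction xs) (simp_all add: algebra_simps power_mult_distrib)
  have L: "(\<Sum>z\<in>#pair_products (x#xs). z^N) = x^N * (\<Sum>y\<leftarrow>xs. y^N) + (\<Sum>z\<in>#pair_products xs. z^N)"
    unfolding pp_Cons by (simp add: a)
  have c: "\<And>ys. (\<Sum>y\<leftarrow>ys. (y::real)^(2*N)) = (\<Sum>y\<leftarrow>ys. y^N * y^N)"
    by (simp add: power_mult power2_eq_square mult.commute[of 2])
  show ?case using Cons.IH unfolding L c by (simp add: power2_eq_square algebra_simps)
qed

lemma pow2_sums:
  fixes lam mu :: "real list"
  assumes "sum_list lam = sum_list mu" "pair_products lam = pair_products mu"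
  shows "(\<Sum>x\<leftarrow>lam. x^(2^k)) = (\<Sum>x\<leftarrow>mu. (x::real)^(2^k))"
proof (induction k)
  case 0
  then show ?case using assms(1) by simp
next
  case (Suc k)
  have "2 ^ Suc k = 2 * (2::nat)^k" by simp
  then show ?case using pp_pow[where xs=lam and N="2^k"] pp_pow[where xs=mu and N="2^k"] Suc assms(2)
    by (simp only:)
qed

lemma dom:
  fixes A B :: "real multiset"
  assumes A: "\<forall>x\<in>#A. 0<x \<and> x \<le> M" and B: "\<forall>x\<in>#B. 0<x \<and> x \<le> M"
    and c: "count B M < count A M"
  shows "\<exists>k. (\<Sum>x\<in>#A. x^(2^k)) \<noteq> (\<Sum>x\<in>#B. x^(2^k))"
proof (rule ccontr)
  assume "\<not> ?thesis"
  hence eq: "\<And>k. (\<Sum>x\<in>#A. x^(2^k)) = (\<Sum>x\<in>#B. x^(2^k))" by blast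
  have M0: "M > 0" using c A by (metis count_inI gr_implies_not0)
  define B' where "B' = filter_mset (\<lambda>x. x \<noteq> M) B"
  define A' where "A' = filter_mset (\<lambda>x. x \<noteq> M) A"
  have Bs: "B = B' + replicate_mset (count B M) M"
    unfolding B'_def by (metis filter_eq_replicate_mset multiset_partition union_commute)
  have As: "A = A' + replicate_mset (count A M) M"
    unfolding A'_def by (metis filter_eq_replicate_mset multiset_partition union_commute)
  have key: "M^(2^k) \<le> (\<Sum>x\<in>#B'. x^(2^k))" for k
  proof -
    define N where "N = (2::nat)^k"
    have "(\<Sum>x\<in>#A'. (0::real)) \<le> (\<Sum>x\<in>#A'. x^N)"
      by (rule sum_mset_mono) (use A in \<open>auto simp: A'_def\<close>)
    hence h0: "(\<Sum>x\<in>#A'. x^N) \<ge> 0" by simp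
    have h1: "(\<Sum>x\<in>#A. x^N) = (\<Sum>x\<in>#A'. x^N) + count A M * M^N"
      by (subst As) simp
    have h2: "(\<Sum>x\<in>#B. x^N) = (\<Sum>x\<in>#B'. x^N) + count B M * M^N"
      by (subst Bs) simp
    have h3: "(\<Sum>x\<in>#A. x^N) = (\<Sum>x\<in>#B. x^N)" using eq N_def by simp
    have h4: "real (count A M) - real (count B M) - 1 \<ge> 0" using c by simp
    have h5: "M^N > 0" using M0 by simp
    have "(real (count A M) - real (count B M) - 1) * M^N \<ge> 0"
      using h4 h5 by simp
    hence "M^N \<le> (\<Sum>x\<in>#B'. x^N)" using h0 h1 h2 h3 by (simp add: algebra_simps)
    thus ?thesis by (simp add: N_def)
  qed
  show False
  proof (cases "B' = {#}")
    case True
    then show False using key[of 0] M0 by simp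
  next
    case False
    define r where "r = Max (set_mset B')"
    have rin: "r \<in># B'" unfolding r_def using False by (simp add: Max_in)
    have rle: "\<And>x. x \<in># B' \<Longrightarrow> x \<le> r" unfolding r_def by simp
    have r0: "0 < r" and rM: "r < M" using rin B by (auto simp: B'_def)
    define q where "q = M / r"
    have q1: "1 < q" unfolding q_def using r0 rM by simp
    obtain k where k: "real (size B') < q^k" using real_arch_pow[OF q1] by blast
    have "k \<le> 2^k" by (simp add: less_imp_le_nat)
    hence k2: "q^k \<le> q^(2^k)" using q1 by (simp add: power_increasing)
    have "(\<Sum>x\<in>#B'. x^(2^k)) \<le> (\<Sum>x\<in>#B'. r^(2^k))"
      by (rule sum_mset_mono) (use rle B in \<open>auto simp: B'_def intro!: power_mono\<close>)
    hence "M^(2^k) \<le> real (size B') * r^(2^k)" using key[of k] by simp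
    hence "q^(2^k) \<le> real (size B')" unfolding q_def using r0
      by (simp add: power_divide divide_le_eq)
    thus False using k k2 by simp
  qed
qed


lemma mset_pow_eq:
  fixes A B :: "real multiset"
  assumes "\<forall>x\<in>#A. 0<x" "\<forall>x\<in>#B. 0<x"
    and "\<forall>k. (\<Sum>x\<in>#A. x^(2^k)) = (\<Sum>x\<in>#B. x^(2^k))"
  shows "A = B"
  using assms
proof (induction "size A + size B" arbitrary: A B rule: less_induct)
  case less
  show ?case
  proof (cases "A = {#} \<and> B = {#}")
    case True then show ?thesis by simp
  next
    case False
    define M where "M = Max (set_mset A \<union> set_mset B)"
    have fin: "finite (set_mset A \<union> set_mset B)" by simp
    have ne: "set_mset A \<union> set_mset B \<noteq> {}" using False by auto
    have Min: "M \<in> set_mset A \<union> set_mset B" unfolding M_def using Max_in[OF fin ne] .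
    have Ab: "\<forall>x\<in>#A. 0<x \<and> x \<le> M" using less.prems(1) fin unfolding M_def by auto
    have Bb: "\<forall>x\<in>#B. 0<x \<and> x \<le> M" using less.prems(2) fin unfolding M_def by auto
    have "\<not> count B M < count A M" using dom[OF Ab Bb] less.prems(3) by metis
    moreover have "\<not> count A M < count B M" using dom[OF Bb Ab] less.prems(3) by metis
    ultimately have ceq: "count A M = count B M" by simp
    have MA: "M \<in># A" and MB: "M \<in># B" using Min ceq by (metis UnE count_greater_zero_iff)+
    define A' where "A' = A - {#M#}"
    define B' where "B' = B - {#M#}"
    have A': "A = add_mset M A'" unfolding A'_def using MA by simp
    have B': "B = add_mset M B'" unfolding B'_def using MB by simp
    have "A' = B'"
    proof (rule less.hyps)
      show "size A' + size B' < size A + size B" using A' B' by (metis add_less_mono size_add_mset lessI)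
      show "\<forall>x\<in>#A'. 0<x" using less.prems(1) A' by (metis union_iff add_mset_add_single)
      show "\<forall>x\<in>#B'. 0<x" using less.prems(2) B' by (metis union_iff add_mset_add_single)
      show "\<forall>k. (\<Sum>x\<in>#A'. x^(2^k)) = (\<Sum>x\<in>#B'. x^(2^k))"
      proof
        fix k
        show "(\<Sum>x\<in>#A'. x^(2^k)) = (\<Sum>x\<in>#B'. x^(2^k))"
          using less.prems(3) A' B' by (metis add_left_cancel image_mset_add_mset sum_mset.insert)
      qed
    qed
    then show ?thesis using A' B' by simp
  qed
qed

theorem mainTheorem4:
  fixes n :: real and lam mu :: "real list"
  assumes "n > 0"
    and "sorted_wrt (\<ge>) lam" and "sorted_wrt (\<ge>) mu"
    and "\<forall>x\<in>set lam. x > 0" and "\<forall>x\<in>set mu. x > 0"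
    and "sum_list lam = n" and "sum_list mu = n"
    and "pair_products lam = pair_products mu"
  shows "lam = mu"
proof -
  have conv: "\<And>xs f. (\<Sum>x\<leftarrow>xs. f x) = (\<Sum>x\<in>#mset xs. (f x :: real))"
    by (metis mset_map sum_mset_sum_list)
  have "mset lam = mset mu"
  proof (rule mset_pow_eq)
    show "\<forall>x\<in>#mset lam. 0<x" "\<forall>x\<in>#mset mu. 0<x" using assms(4,5) by auto
    show "\<forall>k. (\<Sum>x\<in>#mset lam. x^(2^k)) = (\<Sum>x\<in>#mset mu. x^(2^k))"
      using pow2_sums[of lam mu] assms(6,7,8) conv by metis
  qed
  hence m: "mset (rev mu) = mset (rev lam)" by simp
  have s1: "sorted (rev lam)" "sorted (rev mu)" using assms(2,3)
    by (simp_all add: sorted_wrt_rev)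
  have "sort (rev lam) = rev mu" by (rule properties_for_sort) (use m s1 in auto)
  moreover have "sort (rev lam) = rev lam" using s1 by (simp add: sorted_sort_id)
  ultimately show ?thesis by simp
qed

end
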